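(* Let $d\ge1$, $a,b\in\mathbb{C}$, and $\mu_2>\mu_1>-\frac12$. Then for $n\ge0$ and $0\le i\le\lfloor n/(d+1)\rfloor$ the connection coefficient $$C_{n-i(d+1)}(n)=\frac{n!}{(n-i(d+1))!}\sum_{k=0}^i\frac{\gamma_{\mu_1}(n-k(d+1))}{\gamma_{\mu_2}(n-k(d+1))}\frac{(-a)^{i-k}}{(i-k)!}\frac{b^k}{k!}$$ (the coefficient of $Q^{(d+1)}_{n-i(d+1)}(x,a,\mu_1)$ in the expansion of $Q^{(d+1)}_n(x,b,\mu_2)$) satisfies $$C_{n-i(d+1)}(n)=\frac{n!}{i!\,(n-i(d+1))!\,\beta(\mu_1+\frac12,\mu_2-\mu_1)}\int_{-1}^1t^{n-i(d+1)}|t|^{2\mu_1}\,(b-at^{d+1})^i\,\frac{(1-t^2)^{\mu_2-\mu_1}}{1-t}\,dt .$$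
   Context: For $\mu\notin\{-\frac12,-\frac32,\dots\}$ and $n=2p+\epsilon$ ($\epsilon\in\{0,1\}$), $\gamma_\mu(n)=2^{2p+\epsilon}p!\,(\mu+\frac12)_{p+\epsilon}$, $(\alpha)_n=\Gamma(\alpha+n)/\Gamma(\alpha)$; $\exp_\mu(x)=\sum_nx^n/\gamma_\mu(n)$; the generalized Gould–Hopper polynomials are defined by $e^{at^{d+1}}\exp_\mu(xt)=\sum_nQ^{(d+1)}_n(x,a,\mu)t^n/n!$. $\beta(u,v)=\Gamma(u)\Gamma(v)/\Gamma(u+v)$. *)

theory Defs
  imports "HOL-Analysis.Analysis"
begin

definition gam :: "real \<Rightarrow> nat \<Rightarrow> real" where
  "gam \<mu> n = 2 ^ n * fact (n div 2) * pochhammer (\<mu> + 1/2) (n div 2 + n mod 2)"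

definition conn_coeff :: "nat \<Rightarrow> complex \<Rightarrow> complex \<Rightarrow> real \<Rightarrow> real \<Rightarrow> nat \<Rightarrow> nat \<Rightarrow> complex" where
  "conn_coeff d a b \<mu>1 \<mu>2 n i =
     of_real (fact n / fact (n - i * (d + 1))) *
     (\<Sum>k = 0..i. of_real (gam \<mu>1 (n - k * (d + 1)) / gam \<mu>2 (n - k * (d + 1))) *
        ((- a) ^ (i - k) / of_real (fact (i - k))) * (b ^ k / of_real (fact k)))"

end

theory Submission
  imports Defs
begin

lemma L0:
  fixes e v :: real
  assumes e: "e > -1" and v: "v > 0"
  shows "((\<lambda>t. t powr e * (1 - t\<^sup>2) powr (v - 1)) has_integral Beta ((e+1)/2) v / 2) {0..1}"
proof -
  define al where "al = (e+1)/2"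
  have al: "al > 0" using e by (simp add: al_def)
  define f where "f = (\<lambda>s::real. s powr (al - 1) * (1 - s) powr (v - 1))"
  have fi: "set_integrable lborel {0..1} f" unfolding f_def by (rule integrable_Beta[OF al v])
  have fB: "(f has_integral Beta al v) {0..1}" unfolding f_def by (rule has_integral_Beta_real[OF al v])
  have sub: "set_integrable lborel {0..1} (\<lambda>x. f (x^2) * (2*x))"
     "(LBINT x. f x * indicator {0^2..1^2} x) = (LBINT x. f (x^2) * (2*x) * indicator {0..1} x)"
  proof -
    have d: "\<And>x::real. ((\<lambda>x. x^2) has_real_derivative 2*x) (at x)"
      by (auto intro!: derivative_eq_intros)
    have fi0: "set_integrable lborel {0^2..1^2} f" using fi by simp
    have c: "continuous_on {0..1::real} (\<lambda>x. 2*x)" by (intro continuous_intros)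
    show "set_integrable lborel {0..1} (\<lambda>x. f (x^2) * (2*x))"
     "(LBINT x. f x * indicator {0^2..1^2} x) = (LBINT x. f (x^2) * (2*x) * indicator {0..1} x)"
      using integral_substitution[of "\<lambda>x::real. x^2" 0 1 f "\<lambda>x. 2*x", OF fi0 d c] by simp_all
  qed
  have h1: "f integrable_on {0..1}" "(LINT x : {0..1} | lborel. f x) = integral {0..1} f"
    using set_borel_integral_eq_integral[OF fi] by auto
  have h2: "(\<lambda>x. f (x^2) * (2*x)) integrable_on {0..1}"
     "(LINT x : {0..1} | lborel. f (x^2) * (2*x)) = integral {0..1} (\<lambda>x. f (x^2) * (2*x))"
    using set_borel_integral_eq_integral[OF sub(1)] by auto
  have "integral {0..1} (\<lambda>x. f (x^2) * (2*x)) = integral {0..1} f"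
    using sub(2) h1(2) h2(2) by (simp add: set_lebesgue_integral_def mult.commute)
  also have "\<dots> = Beta al v" using fB by (rule integral_unique)
  finally have A: "((\<lambda>x. f (x^2) * (2*x)) has_integral Beta al v) {0..1}"
    using h2(1) by (metis has_integral_integral)
  have eq: "f (x^2) * (2*x) = 2 * (x powr e * (1 - x\<^sup>2) powr (v - 1))" if "x \<in> {0..1}" for x
  proof (cases "x = 0")
    case True then show ?thesis by (simp add: f_def)
  next
    case False
    with that have xp: "x > 0" by auto
    have "(x^2) powr (al - 1) = x powr (2*(al-1))"
    proof -
      have "x^2 = x powr 2" using xp by (simp add: powr_numeral)
      then show ?thesis by (simp add: powr_powr)
    qed
    moreover have "x powr (2*(al-1)) * x = x powr e"
    proof -
      have "x powr (2*(al-1)) * x = x powr (2*(al-1)) * x powr 1" using xp by simp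
      also have "\<dots> = x powr (2*(al-1) + 1)" by (simp only: powr_add)
      also have "2*(al-1) + 1 = e" by (simp add: al_def field_simps)
      finally show ?thesis .
    qed
    ultimately show ?thesis by (simp add: f_def algebra_simps)
  qed
  have "((\<lambda>x. 2 * (x powr e * (1 - x\<^sup>2) powr (v - 1))) has_integral Beta al v) {0..1}"
    using A has_integral_cong[of "{0..1}" "\<lambda>x. f (x^2) * (2*x)", OF eq] by simp
  from has_integral_mult_right[OF this, of "1/2"] show ?thesis by (simp add: al_def)
qed

lemma L1:
  fixes c v :: real and m :: nat
  assumes c: "c > -1/2" and v: "v > 0"
  shows "((\<lambda>t. t^m * \<bar>t\<bar> powr (2*c) * (1 - t\<^sup>2) powr (v - 1)) has_integral
           ((1 + (-1)^m)/2 * Beta ((real m + 2*c + 1)/2) v)) {-1..1}"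
proof -
  define g where "g = (\<lambda>t::real. t^m * \<bar>t\<bar> powr (2*c) * (1 - t\<^sup>2) powr (v - 1))"
  define B where "B = Beta ((real m + 2*c + 1)/2) v"
  have eq: "g t = t powr (real m + 2*c) * (1 - t\<^sup>2) powr (v - 1)" if "t \<in> {0..1}" for t
  proof (cases "t = 0")
    case True then show ?thesis by (simp add: g_def)
  next
    case False
    with that have tp: "t > 0" by auto
    have "t^m * \<bar>t\<bar> powr (2*c) = t powr real m * t powr (2*c)"
      using tp by (simp add: powr_realpow)
    also have "\<dots> = t powr (real m + 2*c)" by (simp only: powr_add)
    finally show ?thesis by (simp add: g_def)
  qed
  have "((\<lambda>t. t powr (real m + 2*c) * (1 - t\<^sup>2) powr (v - 1)) has_integral B / 2) {0..1}"
    using L0[of "real m + 2*c" v] c v by (simp add: B_def)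
  hence I1: "(g has_integral B/2) {0..1}"
    using has_integral_cong[of "{0..1}" g, OF eq] by simp
  have gm: "g (-t) = (-1)^m * g t" for t
    unfolding g_def by (simp only: power_minus[of t m] abs_minus_cancel power2_minus mult.assoc)
  have "((\<lambda>t. (-1)^m * g t) has_integral (-1)^m * (B/2)) {0..1}"
    by (rule has_integral_mult_right[OF I1])
  hence "((\<lambda>t. g (-t)) has_integral (-1)^m * (B/2)) {-0..-(-1)}"
    by (simp add: gm)
  hence I2: "(g has_integral (-1)^m * (B/2)) {-1..0}"
    by (simp only: has_integral_reflect_real)
  have "(g has_integral (-1)^m * (B/2) + B/2) {-1..1}"
    by (rule has_integral_combine[OF _ _ I2 I1]) auto
  thus ?thesis by (simp add: g_def B_def algebra_simps add_divide_distrib)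
qed

lemma L2:
  fixes c v :: real and m :: nat
  assumes c: "c > -1/2" and v: "v > 0"
  shows "((\<lambda>t. t^m * \<bar>t\<bar> powr (2*c) * ((1 - t\<^sup>2) powr v / (1 - t))) has_integral
           Beta (c + 1/2 + real (m div 2 + m mod 2)) v) {-1..1}"
proof -
  define g where "g = (\<lambda>k t::real. t^k * \<bar>t\<bar> powr (2*c) * (1 - t\<^sup>2) powr (v - 1))"
  have w: "(1 - t\<^sup>2) powr v / (1 - t) = (1 + t) * (1 - t\<^sup>2) powr (v - 1)" if "t \<in> {-1..1}" for t :: real
  proof (cases "t = 1 \<or> t = -1")
    case True then show ?thesis by auto
  next
    case False
    with that have p: "1 - t\<^sup>2 > 0" "1 - t \<noteq> 0"
      by (auto simp: abs_square_less_1 abs_less_iff)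
    have "(1 - t\<^sup>2) powr v = (1 - t\<^sup>2) powr (1 + (v - 1))" by simp
    also have "\<dots> = (1 - t\<^sup>2) * (1 - t\<^sup>2) powr (v - 1)" using p by (simp only: powr_add powr_one)
    finally have "(1 - t\<^sup>2) powr v = (1 - t) * ((1 + t) * (1 - t\<^sup>2) powr (v - 1))"
      by (simp add: power2_eq_square algebra_simps)
    then show ?thesis using p by simp
  qed
  have eq: "t^m * \<bar>t\<bar> powr (2*c) * ((1 - t\<^sup>2) powr v / (1 - t)) = g m t + g (Suc m) t"
    if "t \<in> {-1..1}" for t
    using w[OF that] by (simp add: g_def algebra_simps)
  have I: "((\<lambda>t. g m t + g (Suc m) t) has_integral
      ((1 + (-1)^m)/2 * Beta ((real m + 2*c + 1)/2) v +
       (1 + (-1)^Suc m)/2 * Beta ((real (Suc m) + 2*c + 1)/2) v)) {-1..1}"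
    unfolding g_def by (intro has_integral_add L1 c v)
  have val: "(1 + (-1)^m)/2 * Beta ((real m + 2*c + 1)/2) v +
       (1 + (-1)^Suc m)/2 * Beta ((real (Suc m) + 2*c + 1)/2) v
     = Beta (c + 1/2 + real (m div 2 + m mod 2)) v"
  proof (cases "even m")
    case True
    then obtain p where m: "m = 2*p" by auto
    have e: "(real m + 2*c + 1)/2 = c + 1/2 + real (m div 2 + m mod 2)"
      by (simp add: m field_simps)
    have "(1 + (-1)^m)/2 * Beta ((real m + 2*c + 1)/2) v +
       (1 + (-1)^Suc m)/2 * Beta ((real (Suc m) + 2*c + 1)/2) v = Beta ((real m + 2*c + 1)/2) v"
      using True by simp
    then show ?thesis unfolding e .
  next
    case False
    then obtain p where m: "m = 2*p+1" using oddE by blast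
    have dm: "m div 2 + m mod 2 = p + 1" using m by simp
    have e: "(real (Suc m) + 2*c + 1)/2 = c + 1/2 + real (m div 2 + m mod 2)"
      unfolding dm by (simp add: m field_simps)
    have "(1 + (-1)^m)/2 * Beta ((real m + 2*c + 1)/2) v +
       (1 + (-1)^Suc m)/2 * Beta ((real (Suc m) + 2*c + 1)/2) v = Beta ((real (Suc m) + 2*c + 1)/2) v"
      using False by simp
    then show ?thesis unfolding e .
  qed
  have I': "((\<lambda>t. g m t + g (Suc m) t) has_integral Beta (c + 1/2 + real (m div 2 + m mod 2)) v) {-1..1}"
    using I unfolding val .
  show ?thesis using has_integral_cong[of "{-1..1}" "\<lambda>t. t^m * \<bar>t\<bar> powr (2*c) * ((1 - t\<^sup>2) powr v / (1 - t))", OF eq] I'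
    by blast
qed

lemma L3:
  fixes c mu2 :: real and m :: nat
  assumes c: "c > -1/2" and mu: "mu2 > c"
  shows "Beta (c + 1/2 + real (m div 2 + m mod 2)) (mu2 - c) =
         Beta (c + 1/2) (mu2 - c) * (gam c m / gam mu2 m)"
proof -
  define r where "r = m div 2 + m mod 2"
  define x where "x = c + 1/2"
  define v where "v = mu2 - c"
  have x: "x > 0" and v: "v > 0" using c mu by (auto simp: x_def v_def)
  have nx: "x \<notin> \<int>\<^sub>\<le>\<^sub>0" "x + v \<notin> \<int>\<^sub>\<le>\<^sub>0" using x v by (auto dest: nonpos_Ints_nonpos)
  have g1: "Gamma (x + real r) = pochhammer x r * Gamma x"
    using pochhammer_Gamma[OF nx(1), of r] Gamma_real_pos[OF x] by simp
  have g2: "Gamma (x + real r + v) = pochhammer (x + v) r * Gamma (x + v)"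
  proof -
    have "Gamma (x+v) > 0" using x v by (intro Gamma_real_pos) simp
    then show ?thesis using pochhammer_Gamma[OF nx(2), of r] by (simp add: algebra_simps)
  qed
  have ratio: "gam c m / gam mu2 m = pochhammer x r / pochhammer (x + v) r"
    by (simp add: gam_def x_def v_def r_def add.commute)
  have p2: "pochhammer (x + v) r > 0" using x v by (intro pochhammer_pos) simp
  have G: "Gamma (x + v) > 0" using x v by (intro Gamma_real_pos) simp
  have "Beta (x + real r) v = Beta x v * (pochhammer x r / pochhammer (x + v) r)"
  proof -
    have g2': "Gamma (x + real r + v) = pochhammer (x + v) r * Gamma (x + v)" using g2 by (simp add: add_ac)
    show ?thesis unfolding Beta_def g1 g2' using p2 G Gamma_real_pos[OF x] by (simp add: field_simps)
  qed
  then show ?thesis unfolding ratio[symmetric] by (simp add: x_def v_def r_def)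
qed

theorem mainTheorem11:
  fixes d n i :: nat and a b :: complex and \<mu>1 \<mu>2 :: real
  assumes "d \<ge> 1" and "\<mu>1 > -1/2" and "\<mu>2 > \<mu>1"
    and "i \<le> n div (d + 1)"
  shows "(\<lambda>t::real. of_real (t ^ (n - i * (d + 1)) * \<bar>t\<bar> powr (2 * \<mu>1)) *
            (b - a * of_real (t ^ (d + 1))) ^ i *
            of_real ((1 - t\<^sup>2) powr (\<mu>2 - \<mu>1) / (1 - t))) integrable_on {-1..1}
    \<and> conn_coeff d a b \<mu>1 \<mu>2 n i =
      of_real (fact n / (fact i * fact (n - i * (d + 1)) * Beta (\<mu>1 + 1/2) (\<mu>2 - \<mu>1))) *
      integral {-1..1} (\<lambda>t::real. of_real (t ^ (n - i * (d + 1)) * \<bar>t\<bar> powr (2 * \<mu>1)) *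
            (b - a * of_real (t ^ (d + 1))) ^ i *
            of_real ((1 - t\<^sup>2) powr (\<mu>2 - \<mu>1) / (1 - t)))"
proof -
  define c where "c = \<mu>1"
  define v where "v = \<mu>2 - \<mu>1"
  define M where "M = n - i * (d + 1)"
  define m where "m = (\<lambda>k. n - k * (d + 1))"
  define F where "F = (\<lambda>k t::real. t^(m k) * \<bar>t\<bar> powr (2*c) * ((1 - t\<^sup>2) powr v / (1 - t)))"
  define J where "J = (\<lambda>k. Beta (c + 1/2 + real (m k div 2 + m k mod 2)) v)"
  define B where "B = Beta (\<mu>1 + 1/2) (\<mu>2 - \<mu>1)"
  define C where "C = (\<lambda>k. of_nat (i choose k) * b^k * (-a)^(i-k) :: complex)"
  have c: "c > -1/2" and v: "v > 0" using assms by (auto simp: c_def v_def)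
  have idn: "i * (d + 1) \<le> n"
    using assms(4) by (metis div_times_less_eq_dividend le_trans mult_le_mono1)
  have HI: "(F k has_integral J k) {-1..1}" for k
    unfolding F_def J_def by (rule L2[OF c v])
  have mk: "M + (d+1)*(i-k) = m k" if "k \<le> i" for k
  proof -
    have "k*(d+1) \<le> i*(d+1)" using that by (rule mult_le_mono1)
    then show ?thesis using idn that unfolding M_def m_def by (simp add: diff_mult_distrib algebra_simps)
  qed
  let ?f = "\<lambda>t::real. of_real (t ^ (n - i * (d + 1)) * \<bar>t\<bar> powr (2 * \<mu>1)) *
            (b - a * of_real (t ^ (d + 1))) ^ i *
            of_real ((1 - t\<^sup>2) powr (\<mu>2 - \<mu>1) / (1 - t))"
  have pw: "?f t = (\<Sum>k=0..i. C k * of_real (F k t))" for t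
  proof -
    have bin: "(b - a * of_real (t ^ (d + 1))) ^ i =
      (\<Sum>k=0..i. C k * of_real ((t^(d+1))^(i-k)))"
    proof -
      define X where "X = (of_real (t^(d+1)) :: complex)"
      have "b - a * X = b + (-a) * X" by simp
      hence "(b - a * X)^i = (\<Sum>k=0..i. of_nat (i choose k) * b^k * ((-a) * X)^(i-k))"
        using binomial_ring[of b "(-a) * X" i] by (simp only: atMost_atLeast0)
      also have "\<dots> = (\<Sum>k=0..i. C k * X^(i-k))"
        unfolding C_def by (simp only: power_mult_distrib mult.assoc)
      finally show ?thesis unfolding X_def of_real_power .
    qed
    have tm: "of_real (t ^ M * \<bar>t\<bar> powr (2 * c)) * (C k * of_real ((t^(d+1))^(i-k))) *
        of_real ((1 - t\<^sup>2) powr v / (1 - t)) = C k * of_real (F k t)" if "k \<in> {0..i}" for k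
    proof -
      have "t ^ M * (t^(d+1))^(i-k) = t ^ (m k)"
      proof -
        have "t ^ M * (t^(d+1))^(i-k) = t ^ (M + (d+1)*(i-k))"
          by (simp only: power_mult[symmetric] power_add[symmetric])
        then show ?thesis using mk[of k] that by simp
      qed
      hence "t ^ M * \<bar>t\<bar> powr (2 * c) * (t^(d+1))^(i-k) * ((1 - t\<^sup>2) powr v / (1 - t)) = F k t"
        unfolding F_def by (simp add: mult_ac)
      then show ?thesis
        by (metis (no_types, lifting) mult.assoc mult.left_commute of_real_mult)
    qed
    show ?thesis
      unfolding bin sum_distrib_left sum_distrib_right
      using tm by (intro sum.cong) (auto simp: M_def c_def v_def)
  qed
  have HS: "((\<lambda>t. \<Sum>k=0..i. C k * of_real (F k t)) has_integral (\<Sum>k=0..i. C k * of_real (J k))) {-1..1}"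
  proof (rule has_integral_sum)
    fix k
    have "((of_real \<circ> F k) has_integral (of_real (J k) :: complex)) {-1..1}"
      by (rule has_integral_linear[OF HI bounded_linear_of_real])
    then show "((\<lambda>t. C k * of_real (F k t)) has_integral (C k * of_real (J k))) {-1..1}"
      using has_integral_mult_right by (simp add: comp_def)
  qed simp
  have Hf: "(?f has_integral (\<Sum>k=0..i. C k * of_real (J k))) {-1..1}"
    using HS pw by simp
  have B: "B > 0" unfolding B_def using assms by (simp add: Beta_def Gamma_real_pos)
  have JB: "J k = B * (gam \<mu>1 (m k) / gam \<mu>2 (m k))" for k
    unfolding J_def B_def c_def v_def by (rule L3) (use assms in auto)
  have fin: "conn_coeff d a b \<mu>1 \<mu>2 n i =
      of_real (fact n / (fact i * fact M * B)) * (\<Sum>k=0..i. C k * of_real (J k))"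
    unfolding conn_coeff_def sum_distrib_left
  proof (intro sum.cong refl)
    fix k assume k: "k \<in> {0..i}"
    define R where "R = gam \<mu>1 (m k) / gam \<mu>2 (m k)"
    have bc: "(of_nat (i choose k) :: complex) = of_real (fact i / (fact k * fact (i-k)))"
      using binomial_fact[of k i] k by (metis atLeastAtMost_iff of_real_of_nat_eq)
    have r: "fact n / (fact i * fact M * B) * (fact i / (fact k * fact (i-k))) * (B * R) =
        fact n / fact M * R / fact (i-k) / fact k"
      using B by (simp add: field_simps)
    show "of_real (fact n / fact (n - i * (d + 1))) *
         (of_real (gam \<mu>1 (n - k * (d + 1)) / gam \<mu>2 (n - k * (d + 1))) *
          ((- a) ^ (i - k) / of_real (fact (i - k))) * (b ^ k / of_real (fact k))) =
         of_real (fact n / (fact i * fact M * B)) * (C k * of_real (J k))"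
      unfolding C_def JB bc R_def[symmetric] M_def[symmetric]
      using r[THEN arg_cong[of _ _ "of_real :: real \<Rightarrow> complex"]] B
      by (simp add: m_def R_def field_simps)
  qed
  show ?thesis
    using Hf fin by (auto simp: M_def B_def intro: has_integral_integrable dest: integral_unique)
qed

end
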